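(* Let $\varphi(z,x,y)$ satisfy Conditions (C1)–(C5) described in the context, be twice continuously differentiable in $z$, and satisfy $\varphi''(z,x,y)\ge c_7z^{-2}\varphi(z,x,y)$ for $z>0$ and a.e. $(x,y)$, with a constant $c_7$ independent of $z,x,y$. Let $\psi(z,x,y)$ be non-negative, non-decreasing and twice continuously differentiable in $z$ for a.e. $(x,y)\in\Omega\times\Omega$, satisfy Conditions (C1), (C4), (C5), and the estimate $$\psi''(z,x,y)\ge -c_9z^{-1}\psi'(z,x,y)-c_{10}z^{-2}\psi(z,x,y)\quad\text{for a.e. }(x,y),$$ where $c_9<2$ and $c_{10}<c_7$ are constants independent of $z,x,y$. Suppose also that for some $q\ge0$ independent of $z,x,y$ the function $z\mapsto\psi(z,x,y)/z^q$ is non-increasing for a.e. $(x,y)$. Then the function $\psi(z,x,y)\varphi(z,x,y)$ satisfies Conditions (C1)–(C5).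
   Context: Let $\Omega\subseteq\mathbb R^d$ be a domain; functions in $L_{1,loc}(\Omega)$ are complex-valued; derivatives $'$ are with respect to $z$. A real function $r$ on $[0,\infty)$ is almost increasing (resp. almost decreasing) with constant $\beta\ge1$ if $r(s)\le\beta r(t)$ (resp. $\beta r(s)\ge r(t)$) for all $0\le s\le t$. For a function $\theta:[0,\infty)\times\Omega\times\Omega\to[0,\infty)$: (C1) for each $u\in L_{1,loc}(\Omega)$ the function $(x,y)\mapsto\theta(|u(x)-u(y)|,x,y)$ is measurable on $\Omega\times\Omega$; (C2) for every $\varepsilon>0$ there is $\delta\in(0,1)$ such that $\theta(\frac{s+t}{2},x,y)\le(1-\delta)\frac{\theta(s,x,y)+\theta(t,x,y)}{2}$ for a.e. $(x,y)$ and all $s,t>0$ with $|s-t|\ge\varepsilon\max\{s,t\}$; (C3) there are constants $1<p_-\le p_+$ and $\beta\ge1$ such that for a.e. $(x,y)$ the function $t\mapsto\theta(t,x,y)/t^{p_-}$ is almost increasing with constant $\beta$ and $t\mapsto\theta(t,x,y)/t^{p_+}$ is almost decreasing with constant $\beta$; (C4) for a.e. $(x,y)$: $c_1^{-1}\le\theta(1,x,y)\le c_1$ with some constant $c_1>0$, $\theta(0,x,y)=0$, and $\theta(t,x,y)>0$ for $t>0$; (C5) for a.e. $(x,y)$, $\theta(t,x,y)$ is differentiable in $t>0$ and $0<t\theta'(t,x,y)\le c_2\theta(t,x,y)$ for $t>0$, with some constant $c_2>1$. *)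

theory Defs
  imports "HOL-Analysis.Analysis"
begin

definition is_domain :: "'a::euclidean_space set \<Rightarrow> bool" where
  "is_domain \<Omega> \<longleftrightarrow> open \<Omega> \<and> connected \<Omega> \<and> \<Omega> \<noteq> {}"

definition L1_loc :: "'a::euclidean_space set \<Rightarrow> ('a \<Rightarrow> complex) set" where
  "L1_loc \<Omega> = {u. u \<in> borel_measurable (lebesgue_on \<Omega>) \<and>
      (\<forall>K. compact K \<and> K \<subseteq> \<Omega> \<longrightarrow> integrable (lebesgue_on K) u)}"

abbreviation AE2 :: "'a::euclidean_space set \<Rightarrow> ('a \<Rightarrow> 'a \<Rightarrow> bool) \<Rightarrow> bool" where
  "AE2 \<Omega> P \<equiv> (AE p in lebesgue_on (\<Omega> \<times> \<Omega>). P (fst p) (snd p))"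

definition almost_incr_on :: "real set \<Rightarrow> real \<Rightarrow> (real \<Rightarrow> real) \<Rightarrow> bool" where
  "almost_incr_on S \<beta> r \<longleftrightarrow> (\<forall>s\<in>S. \<forall>t\<in>S. s \<le> t \<longrightarrow> r s \<le> \<beta> * r t)"

definition almost_decr_on :: "real set \<Rightarrow> real \<Rightarrow> (real \<Rightarrow> real) \<Rightarrow> bool" where
  "almost_decr_on S \<beta> r \<longleftrightarrow> (\<forall>s\<in>S. \<forall>t\<in>S. s \<le> t \<longrightarrow> \<beta> * r s \<ge> r t)"

definition nonneg_fun :: "'a::euclidean_space set \<Rightarrow> (real \<Rightarrow> 'a \<Rightarrow> 'a \<Rightarrow> real) \<Rightarrow> bool" where
  "nonneg_fun \<Omega> \<theta> \<longleftrightarrow> (\<forall>t\<ge>0. \<forall>x\<in>\<Omega>. \<forall>y\<in>\<Omega>. \<theta> t x y \<ge> 0)"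

definition cond_C1 :: "'a::euclidean_space set \<Rightarrow> (real \<Rightarrow> 'a \<Rightarrow> 'a \<Rightarrow> real) \<Rightarrow> bool" where
  "cond_C1 \<Omega> \<theta> \<longleftrightarrow> (\<forall>u \<in> L1_loc \<Omega>.
     (\<lambda>p. \<theta> (cmod (u (fst p) - u (snd p))) (fst p) (snd p))
       \<in> borel_measurable (lebesgue_on (\<Omega> \<times> \<Omega>)))"

definition cond_C2 :: "'a::euclidean_space set \<Rightarrow> (real \<Rightarrow> 'a \<Rightarrow> 'a \<Rightarrow> real) \<Rightarrow> bool" where
  "cond_C2 \<Omega> \<theta> \<longleftrightarrow> (\<forall>\<epsilon>>0. \<exists>\<delta>. 0 < \<delta> \<and> \<delta> < 1 \<and>
     AE2 \<Omega> (\<lambda>x y. \<forall>s>0. \<forall>t>0. \<bar>s - t\<bar> \<ge> \<epsilon> * max s t \<longrightarrow>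
        \<theta> ((s + t) / 2) x y \<le> (1 - \<delta>) * ((\<theta> s x y + \<theta> t x y) / 2)))"

definition cond_C3 :: "'a::euclidean_space set \<Rightarrow> (real \<Rightarrow> 'a \<Rightarrow> 'a \<Rightarrow> real) \<Rightarrow> bool" where
  "cond_C3 \<Omega> \<theta> \<longleftrightarrow> (\<exists>pm pp \<beta>. 1 < pm \<and> pm \<le> pp \<and> \<beta> \<ge> 1 \<and>
     AE2 \<Omega> (\<lambda>x y. almost_incr_on {0<..} \<beta> (\<lambda>t. \<theta> t x y / t powr pm) \<and>
                  almost_decr_on {0<..} \<beta> (\<lambda>t. \<theta> t x y / t powr pp)))"

definition cond_C4 :: "'a::euclidean_space set \<Rightarrow> (real \<Rightarrow> 'a \<Rightarrow> 'a \<Rightarrow> real) \<Rightarrow> bool" where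
  "cond_C4 \<Omega> \<theta> \<longleftrightarrow> (\<exists>c1>0. AE2 \<Omega> (\<lambda>x y. 1 / c1 \<le> \<theta> 1 x y \<and> \<theta> 1 x y \<le> c1 \<and>
     \<theta> 0 x y = 0 \<and> (\<forall>t>0. \<theta> t x y > 0)))"

definition cond_C5 :: "'a::euclidean_space set \<Rightarrow> (real \<Rightarrow> 'a \<Rightarrow> 'a \<Rightarrow> real) \<Rightarrow> bool" where
  "cond_C5 \<Omega> \<theta> \<longleftrightarrow> (\<exists>c2>1. AE2 \<Omega> (\<lambda>x y. \<forall>t>0.
     (\<lambda>z. \<theta> z x y) differentiable (at t) \<and>
     0 < t * deriv (\<lambda>z. \<theta> z x y) t \<and> t * deriv (\<lambda>z. \<theta> z x y) t \<le> c2 * \<theta> t x y))"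

definition C2_on :: "real set \<Rightarrow> (real \<Rightarrow> real) \<Rightarrow> bool" where
  "C2_on S f \<longleftrightarrow> (\<forall>z\<in>S. f differentiable (at z)) \<and> (\<forall>z\<in>S. deriv f differentiable (at z))
     \<and> continuous_on S (deriv (deriv f))"

end

theory Submission
  imports Defs
begin

lemma taylor2:
  fixes f Fd Fdd :: "real \<Rightarrow> real"
  assumes d1: "\<And>z. lo \<le> z \<Longrightarrow> z \<le> hi \<Longrightarrow> (f has_real_derivative Fd z) (at z)"
    and d2: "\<And>z. lo \<le> z \<Longrightarrow> z \<le> hi \<Longrightarrow> (Fd has_real_derivative Fdd z) (at z)"
    and K: "\<And>z. lo \<le> z \<Longrightarrow> z \<le> hi \<Longrightarrow> Fdd z \<ge> K"
    and a: "lo \<le> a" "a \<le> hi" and b: "lo \<le> b" "b \<le> hi"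
  shows "f b \<ge> f a + Fd a * (b - a) + K * (b - a)^2 / 2"
proof (cases "b = a")
  case True then show ?thesis by simp
next
  case False
  define diff where "diff = (\<lambda>m::nat. if m = 0 then f else if m = 1 then Fd else Fdd)"
  have "\<exists>t. (if b < a then b < t \<and> t < a else a < t \<and> t < b) \<and>
    f b = (\<Sum>m<2. (diff m a / fact m) * (b - a)^m) + (diff 2 t / fact 2) * (b - a)^2"
  proof (rule Taylor[where a=lo and b=hi])
    show "\<forall>m t. m < 2 \<and> lo \<le> t \<and> t \<le> hi \<longrightarrow> DERIV (diff m) t :> diff (Suc m) t"
    proof (intro allI impI)
      fix m t assume "m < (2::nat) \<and> lo \<le> t \<and> t \<le> hi"
      then have "m = 0 \<or> m = 1" and "lo \<le> t" "t \<le> hi" by auto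
      then show "DERIV (diff m) t :> diff (Suc m) t" using d1 d2 by (auto simp: diff_def)
    qed
  qed (use a b False in \<open>auto simp: diff_def\<close>)
  then obtain t where t: "(if b < a then b < t \<and> t < a else a < t \<and> t < b)"
    and eq: "f b = (\<Sum>m<2. (diff m a / fact m) * (b - a)^m) + (diff 2 t / fact 2) * (b - a)^2"
    by blast
  have lt: "lo \<le> t" "t \<le> hi" using t a b by (auto split: if_splits)
  have eq2: "f b = f a + Fd a * (b - a) + Fdd t / 2 * (b - a)^2"
    using eq by (simp add: diff_def numeral_2_eq_2)
  have "K * (b - a)^2 / 2 \<le> Fdd t / 2 * (b - a)^2"
    using K[OF lt] by (simp add: mult_right_mono)
  then show ?thesis using eq2 by simp
qed

lemma taylor2_up:
  fixes f Fd Fdd :: "real \<Rightarrow> real"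
  assumes d1: "\<And>z. lo \<le> z \<Longrightarrow> z \<le> hi \<Longrightarrow> (f has_real_derivative Fd z) (at z)"
    and d2: "\<And>z. lo \<le> z \<Longrightarrow> z \<le> hi \<Longrightarrow> (Fd has_real_derivative Fdd z) (at z)"
    and K: "\<And>z. lo \<le> z \<Longrightarrow> z \<le> hi \<Longrightarrow> Fdd z \<le> K"
    and a: "lo \<le> a" "a \<le> hi" and b: "lo \<le> b" "b \<le> hi"
  shows "f b \<le> f a + Fd a * (b - a) + K * (b - a)^2 / 2"
proof -
  have "(\<lambda>z. - f z) b \<ge> (\<lambda>z. - f z) a + (- Fd a) * (b - a) + (-K) * (b - a)^2 / 2"
    by (rule taylor2[where lo=lo and hi=hi and Fd="\<lambda>z. - Fd z" and Fdd="\<lambda>z. - Fdd z"])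
      (use d1 d2 K a b in \<open>auto intro: derivative_intros\<close>)
  then show ?thesis by simp
qed

lemma midconv_dd_nonneg:
  fixes g gA gB :: "real \<Rightarrow> real"
  assumes d1: "\<And>z. z > 0 \<Longrightarrow> (g has_real_derivative gA z) (at z)"
    and d2: "\<And>z. z > 0 \<Longrightarrow> (gA has_real_derivative gB z) (at z)"
    and cont: "continuous_on {0<..} gB"
    and mid: "\<And>s t. s > 0 \<Longrightarrow> t > 0 \<Longrightarrow> g ((s + t) / 2) \<le> (g s + g t) / 2"
    and z0: "z0 > 0"
  shows "gB z0 \<ge> 0"
proof (rule ccontr)
  assume "\<not> gB z0 \<ge> 0"
  then have neg: "gB z0 < 0" by simp
  have "isCont gB z0" using cont z0 by (simp add: continuous_on_eq_continuous_at)
  then have "(gB \<longlongrightarrow> gB z0) (at z0)" by (simp add: isCont_def)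
  then have "\<forall>\<^sub>F z in at z0. gB z < gB z0 / 2" using neg by (intro order_tendstoD(2)) auto
  then obtain d where d: "d > 0" and dd: "\<And>z. z \<noteq> z0 \<Longrightarrow> dist z z0 < d \<Longrightarrow> gB z < gB z0 / 2"
    by (auto simp: eventually_at)
  define h where "h = min d z0 / 2"
  have h: "h > 0" "h < d" "h < z0" using d z0 by (auto simp: h_def)
  have bnd: "gB z \<le> gB z0 / 2" if "z0 - h \<le> z" "z \<le> z0 + h" for z
  proof (cases "z = z0")
    case True then show ?thesis using neg by simp
  next
    case False
    have "\<bar>z - z0\<bar> < d" using that h by auto
    then show ?thesis using dd[of z] False by (auto simp: dist_real_def)
  qed
  have "g (z0 + h) \<le> g z0 + gA z0 * ((z0 + h) - z0) + (gB z0 / 2) * ((z0 + h) - z0)^2 / 2"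
    by (rule taylor2_up[where lo="z0 - h" and hi="z0 + h" and Fdd=gB]) (use d1 d2 bnd h in auto)
  moreover have "g (z0 - h) \<le> g z0 + gA z0 * ((z0 - h) - z0) + (gB z0 / 2) * ((z0 - h) - z0)^2 / 2"
    by (rule taylor2_up[where lo="z0 - h" and hi="z0 + h" and Fdd=gB]) (use d1 d2 bnd h in auto)
  moreover have "g (((z0 - h) + (z0 + h)) / 2) \<le> (g (z0 - h) + g (z0 + h)) / 2"
    using mid[of "z0 - h" "z0 + h"] h by linarith
  moreover have "gB z0 * h^2 < 0" using neg h by (simp add: mult_neg_pos)
  ultimately show False by (simp add: power2_eq_square algebra_simps)
qed

lemma zderiv_ge:
  fixes g gA gB :: "real \<Rightarrow> real"
  assumes d1: "\<And>z. z > 0 \<Longrightarrow> (g has_real_derivative gA z) (at z)"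
    and d2: "\<And>z. z > 0 \<Longrightarrow> (gA has_real_derivative gB z) (at z)"
    and dd: "\<And>z. z > 0 \<Longrightarrow> gB z \<ge> 0"
    and g1nn: "\<And>z. z > 0 \<Longrightarrow> gA z \<ge> 0"
    and small: "\<And>w. 0 < w \<Longrightarrow> w \<le> 1 \<Longrightarrow> g w \<le> C * w"
    and z: "z > 0"
  shows "g z \<le> z * gA z"
proof -
  have key: "g z - z * gA z \<le> g w" if w: "0 < w" "w < z" for w
  proof -
    have "g w \<ge> g z + gA z * (w - z) + 0 * (w - z)^2 / 2"
      by (rule taylor2[where lo=w and hi=z and Fdd=gB]) (use d1 d2 dd w in auto)
    moreover have "gA z * w \<ge> 0" using g1nn[OF z] w by simp
    ultimately show ?thesis by (simp add: algebra_simps)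
  qed
  show ?thesis
  proof (rule ccontr)
    assume "\<not> ?thesis"
    then have a0: "g z - z * gA z > 0" by simp
    define C' where "C' = max C 1"
    have C': "C' > 0" "C \<le> C'" by (auto simp: C'_def)
    define w where "w = min (z/2) (min (1/2) ((g z - z * gA z) / (2 * C')))"
    have w: "0 < w" "w < z" "w \<le> 1" using z a0 C' by (auto simp: w_def)
    have "g w \<le> C * w" using small w by auto
    also have "\<dots> \<le> C' * w" using C' w by (simp add: mult_right_mono)
    also have "\<dots> \<le> C' * ((g z - z * gA z) / (2 * C'))"
      using C' by (intro mult_left_mono) (auto simp: w_def)
    also have "\<dots> = (g z - z * gA z) / 2" using C' by simp
    finally show False using key[OF w(1,2)] a0 by simp
  qed
qed

lemma powr_m2: "(z::real) > 0 \<Longrightarrow> z powr (-2) = 1 / z^2"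
  by (simp add: powr_minus_divide powr_numeral)
lemma powr_m1: "(z::real) > 0 \<Longrightarrow> z powr (-1) = 1 / z"
  by (simp add: powr_minus_divide)

lemma core_dd:
  fixes f0 g0 fa ga fb gb z :: real
  assumes fpos: "f0 \<ge> 0" and gpos: "g0 \<ge> 0" and f1nn: "fa \<ge> 0"
    and g1: "g0 \<le> z * ga"
    and gdd: "gb \<ge> c7 * z powr (-2) * g0"
    and fdd: "fb \<ge> - c9 * z powr (-1) * fa - c10 * z powr (-2) * f0"
    and c9: "c9 < 2" and z: "z > 0"
  shows "fb * g0 + 2 * (fa * ga) + f0 * gb \<ge> (c7 - c10) * (f0 * g0) / z^2"
proof -
  have A: "fb * g0 \<ge> (- c9 * fa / z - c10 * f0 / z^2) * g0"
    using fdd gpos z by (intro mult_right_mono) (auto simp: powr_m1 powr_m2)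
  have B: "f0 * gb \<ge> f0 * (c7 * g0 / z^2)"
    using gdd fpos z by (intro mult_left_mono) (auto simp: powr_m2)
  have "g0 / z \<le> ga" using g1 z by (simp add: divide_le_eq mult.commute)
  then have C: "fa * ga \<ge> fa * (g0 / z)" using f1nn by (intro mult_left_mono) auto
  have D: "(2 - c9) * (fa * g0 / z) \<ge> 0" using c9 f1nn gpos z by simp
  have "fb * g0 + 2 * (fa * ga) + f0 * gb \<ge>
      (- c9 * fa / z - c10 * f0 / z^2) * g0 + 2 * (fa * (g0 / z)) + f0 * (c7 * g0 / z^2)"
    using A B C by linarith
  also have "(- c9 * fa / z - c10 * f0 / z^2) * g0 + 2 * (fa * (g0 / z)) + f0 * (c7 * g0 / z^2)
     = (2 - c9) * (fa * g0 / z) + (c7 - c10) * (f0 * g0) / z^2"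
    using z by (simp add: field_simps)
  finally show ?thesis using D by linarith
qed

lemma core_mid_lt:
  fixes f g fA gA fB gB :: "real \<Rightarrow> real"
  assumes df1: "\<And>z. z > 0 \<Longrightarrow> (f has_real_derivative fA z) (at z)"
    and df2: "\<And>z. z > 0 \<Longrightarrow> (fA has_real_derivative fB z) (at z)"
    and dg1: "\<And>z. z > 0 \<Longrightarrow> (g has_real_derivative gA z) (at z)"
    and dg2: "\<And>z. z > 0 \<Longrightarrow> (gA has_real_derivative gB z) (at z)"
    and fpos: "\<And>z. z > 0 \<Longrightarrow> f z \<ge> 0" and gpos: "\<And>z. z > 0 \<Longrightarrow> g z \<ge> 0"
    and f1nn: "\<And>z. z > 0 \<Longrightarrow> fA z \<ge> 0" and g1nn: "\<And>z. z > 0 \<Longrightarrow> gA z \<ge> 0"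
    and gA: "\<And>z. z > 0 \<Longrightarrow> g z \<le> z * gA z"
    and gdd: "\<And>z. z > 0 \<Longrightarrow> gB z \<ge> c7 * z powr (-2) * g z"
    and fdd: "\<And>z. z > 0 \<Longrightarrow> fB z \<ge> - c9 * z powr (-1) * fA z - c10 * z powr (-2) * f z"
    and c9: "c9 < 2" and c10: "c10 < c7" and e: "\<epsilon> > 0"
    and st: "0 < s" "s < t" and gap: "\<bar>s - t\<bar> \<ge> \<epsilon> * max s t"
  shows "f ((s + t) / 2) * g ((s + t) / 2) \<le>
     (1 / (1 + (c7 - c10) * \<epsilon>^2 / 16)) * ((f s * g s + f t * g t) / 2)"
proof -
  define c where "c = c7 - c10"
  have c: "c > 0" using c10 by (simp add: c_def)
  define th where "th = (\<lambda>z. f z * g z)"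
  define th1 where "th1 = (\<lambda>z. fA z * g z + f z * gA z)"
  define th2 where "th2 = (\<lambda>z. fB z * g z + 2 * (fA z * gA z) + f z * gB z)"
  have d1: "(th has_real_derivative th1 z) (at z)" if "z > 0" for z
    unfolding th_def th1_def using DERIV_mult[OF df1[OF that] dg1[OF that]] by (simp add: mult.commute)
  have d2: "(th1 has_real_derivative th2 z) (at z)" if "z > 0" for z
    unfolding th1_def th2_def
    by (rule DERIV_cong[OF DERIV_add[OF DERIV_mult[OF df2[OF that] dg1[OF that]]
          DERIV_mult[OF df1[OF that] dg2[OF that]]]]) (simp add: algebra_simps)
  have dd: "th2 z \<ge> c * th z / z^2" if "z > 0" for z
    unfolding th2_def th_def c_def
    by (rule core_dd[OF fpos[OF that] gpos[OF that] f1nn[OF that] gA[OF that] gdd[OF that] fdd[OF that] c9 that])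
  have thnn: "th z \<ge> 0" if "z > 0" for z using fpos gpos that by (simp add: th_def)
  have th1nn: "th1 z \<ge> 0" if "z > 0" for z using fpos gpos f1nn g1nn that by (simp add: th1_def)
  have dd0: "th2 z \<ge> 0" if "z > 0" for z
    using dd[OF that] thnn[OF that] c that by (smt (verit) divide_nonneg_pos mult_nonneg_nonneg zero_less_power)
  define m where "m = (s + t) / 2"
  define h where "h = (t - s) / 2"
  have m: "s < m" "m < t" "m > 0" using st by (auto simp: m_def)
  have mono: "th z \<ge> th m" if "m \<le> z" "z \<le> t" for z
  proof -
    have "th z \<ge> th m + th1 m * (z - m) + 0 * (z - m)^2 / 2"
      by (rule taylor2[where lo=m and hi=t and Fdd=th2]) (use d1 d2 dd0 m that in auto)
    moreover have "th1 m * (z - m) \<ge> 0" using th1nn[OF m(3)] that by simp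
    ultimately show ?thesis by simp
  qed
  have K: "th2 z \<ge> c * th m / t^2" if "m \<le> z" "z \<le> t" for z
  proof -
    have z: "z > 0" using that m by simp
    have "c * th m / t^2 \<le> c * th z / t^2"
      using mono[OF that] c by (simp add: divide_right_mono)
    also have "\<dots> \<le> c * th z / z^2"
      using that z c thnn[OF z] by (intro divide_left_mono mult_nonneg_nonneg power_mono) auto
    also have "\<dots> \<le> th2 z" using dd[OF z] .
    finally show ?thesis .
  qed
  have T1: "th t \<ge> th m + th1 m * (t - m) + (c * th m / t^2) * (t - m)^2 / 2"
    by (rule taylor2[where lo=m and hi=t and Fdd=th2]) (use d1 d2 K m in auto)
  have T2: "th s \<ge> th m + th1 m * (s - m) + 0 * (s - m)^2 / 2"
    by (rule taylor2[where lo=s and hi=m and Fdd=th2]) (use d1 d2 dd0 m st in auto)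
  have tm: "t - m = h" "s - m = - h" unfolding m_def h_def by (simp_all add: field_simps)
  have "\<epsilon> * t \<le> 2 * h" using gap st by (auto simp: h_def max_def)
  then have "(\<epsilon> * t)^2 \<le> (2 * h)^2" using e st by (intro power_mono) auto
  then have hh: "\<epsilon>^2 / 4 \<le> h^2 / t^2" using st by (simp add: field_simps power_mult_distrib)
  have "c * th m * (\<epsilon>^2 / 4) \<le> c * th m * (h^2 / t^2)"
    using hh c thnn[OF m(3)] by (intro mult_left_mono) auto
  moreover have "c * th m * (h^2 / t^2) = (c * th m / t^2) * h^2" by simp
  ultimately have X: "(c * th m / t^2) * h^2 \<ge> c * th m * \<epsilon>^2 / 4" by simp
  have sum: "th s + th t \<ge> 2 * th m + c * th m * \<epsilon>^2 / 8"
  proof -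
    define Q where "Q = (c * th m / t^2) * h^2"
    have T1': "th t \<ge> th m + th1 m * h + Q / 2" using T1 unfolding tm Q_def by simp
    have T2': "th s \<ge> th m - th1 m * h" using T2 unfolding tm by simp
    have X': "Q \<ge> c * th m * \<epsilon>^2 / 4" using X unfolding Q_def .
    show ?thesis using T1' T2' X' by linarith
  qed
  have pos: "1 + c * \<epsilon>^2 / 16 > 0" using c by (simp add: add_pos_nonneg)
  have "th m * (1 + c * \<epsilon>^2 / 16) \<le> (th s + th t) / 2" using sum by (simp add: field_simps)
  then have "th m \<le> (th s + th t) / 2 / (1 + c * \<epsilon>^2 / 16)" by (rule iffD2[OF pos_le_divide_eq[OF pos]])
  then show ?thesis by (simp add: th_def m_def c_def)
qed

lemma C2_on_derivs:
  assumes "C2_on {0<..} f" "z > 0"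
  shows "(f has_real_derivative deriv f z) (at z)"
    and "(deriv f has_real_derivative deriv (deriv f) z) (at z)"
  using assms by (auto simp: C2_on_def DERIV_deriv_iff_real_differentiable)

lemma small_from_incr:
  fixes g :: "real \<Rightarrow> real"
  assumes inc: "almost_incr_on {0<..} \<beta> (\<lambda>t. g t / t powr pm)" and pm: "pm > 1"
    and gnn: "\<And>t. t > 0 \<Longrightarrow> g t \<ge> 0" and b: "\<beta> \<ge> 1"
    and w: "0 < w" "w \<le> 1"
  shows "g w \<le> (\<beta> * g 1) * w"
proof -
  have "g w / w powr pm \<le> \<beta> * (g 1 / 1 powr pm)" using inc[unfolded almost_incr_on_def, rule_format, of w 1] w by auto
  then have "g w \<le> \<beta> * g 1 * w powr pm" using w by (simp add: divide_le_eq mult.commute)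
  also have "w powr pm \<le> w powr 1" using w pm by (intro powr_mono') auto
  then have "\<beta> * g 1 * w powr pm \<le> \<beta> * g 1 * w" using w b gnn[of 1] by (intro mult_left_mono) auto
  finally show ?thesis .
qed

lemma C2pt:
  fixes f g :: "real \<Rightarrow> real"
  assumes f2: "C2_on {0<..} f" and g2: "C2_on {0<..} g"
    and fd: "\<And>t. t > 0 \<Longrightarrow> 0 < t * deriv f t" and gd: "\<And>t. t > 0 \<Longrightarrow> 0 < t * deriv g t"
    and fpos: "\<And>t. t > 0 \<Longrightarrow> f t > 0" and gpos: "\<And>t. t > 0 \<Longrightarrow> g t > 0"
    and gdd: "\<And>z. z > 0 \<Longrightarrow> deriv (deriv g) z \<ge> c7 * z powr (-2) * g z"
    and fdd: "\<And>z. z > 0 \<Longrightarrow> deriv (deriv f) z \<ge>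
          - c9 * z powr (-1) * deriv f z - c10 * z powr (-2) * f z"
    and small: "\<And>w. 0 < w \<Longrightarrow> w \<le> 1 \<Longrightarrow> g w \<le> C * w"
    and mid: "\<And>s t. s > 0 \<Longrightarrow> t > 0 \<Longrightarrow> g ((s + t) / 2) \<le> (g s + g t) / 2"
    and c9: "c9 < 2" and c10: "c10 < c7" and e: "\<epsilon> > 0"
    and st: "0 < s" "0 < t" and gap: "\<bar>s - t\<bar> \<ge> \<epsilon> * max s t"
  shows "f ((s + t) / 2) * g ((s + t) / 2) \<le>
     (1 / (1 + (c7 - c10) * \<epsilon>^2 / 16)) * ((f s * g s + f t * g t) / 2)"
proof -
  note df = C2_on_derivs[OF f2] and dg = C2_on_derivs[OF g2]
  have f1: "deriv f z \<ge> 0" if "z > 0" for z using fd[OF that] that by (simp add: zero_less_mult_iff)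
  have g1: "deriv g z \<ge> 0" if "z > 0" for z using gd[OF that] that by (simp add: zero_less_mult_iff)
  have gdd0: "deriv (deriv g) z \<ge> 0" if "z > 0" for z
    by (rule midconv_dd_nonneg[where g=g and gA="deriv g"])
      (use dg mid that g2 in \<open>auto simp: C2_on_def\<close>)
  have gz: "g z \<le> z * deriv g z" if "z > 0" for z
    by (rule zderiv_ge[where gB="deriv (deriv g)" and C=C]) (use dg gdd0 g1 small that in auto)
  have main: "f ((a + b) / 2) * g ((a + b) / 2) \<le>
     (1 / (1 + (c7 - c10) * \<epsilon>^2 / 16)) * ((f a * g a + f b * g b) / 2)"
    if ab: "0 < a" "a < b" "\<bar>a - b\<bar> \<ge> \<epsilon> * max a b" for a b
    by (rule core_mid_lt[where fA="deriv f" and gA="deriv g" and fB="deriv (deriv f)" and gB="deriv (deriv g)"])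
      (use df dg fpos gpos f1 g1 gz gdd fdd c9 c10 e ab in \<open>auto simp: less_imp_le\<close>)
  consider "s < t" | "s = t" | "t < s" by linarith
  then show ?thesis
  proof cases
    case 1 then show ?thesis using main[of s t] st gap by auto
  next
    case 2
    then have "\<epsilon> * t \<le> 0" using gap by simp
    moreover have "\<epsilon> * t > 0" using e st by simp
    ultimately show ?thesis by linarith
  next
    case 3 then show ?thesis using main[of t s] st gap by (auto simp: max.commute abs_minus_commute add.commute)
  qed
qed

lemma C3pt_incr:
  fixes f g :: "real \<Rightarrow> real"
  assumes mono: "mono_on {0..} f" and fnn: "\<And>t. t > 0 \<Longrightarrow> f t \<ge> 0"
    and gnn: "\<And>t. t > 0 \<Longrightarrow> g t \<ge> 0"
    and inc: "almost_incr_on {0<..} \<beta> (\<lambda>t. g t / t powr pm)"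
  shows "almost_incr_on {0<..} \<beta> (\<lambda>t. f t * g t / t powr pm)"
  unfolding almost_incr_on_def
proof (intro ballI impI)
  fix s t :: real assume s: "s \<in> {0<..}" and t: "t \<in> {0<..}" and st: "s \<le> t"
  have A: "f s \<le> f t" using mono s t st by (auto intro: mono_onD)
  have B: "g s / s powr pm \<le> \<beta> * (g t / t powr pm)"
    using inc s t st unfolding almost_incr_on_def by auto
  have "f s * (g s / s powr pm) \<le> f t * (\<beta> * (g t / t powr pm))"
    using A B fnn[of s] fnn[of t] gnn[of s] s t by (intro mult_mono) auto
  then show "f s * g s / s powr pm \<le> \<beta> * (f t * g t / t powr pm)" by (simp add: algebra_simps)
qed

lemma C3pt_decr:
  fixes f g :: "real \<Rightarrow> real"
  assumes anti: "antimono_on {0<..} (\<lambda>z. f z / z powr q)" and fnn: "\<And>t. t > 0 \<Longrightarrow> f t \<ge> 0"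
    and gnn: "\<And>t. t > 0 \<Longrightarrow> g t \<ge> 0" and b: "\<beta> \<ge> 0"
    and dec: "almost_decr_on {0<..} \<beta> (\<lambda>t. g t / t powr pp)"
  shows "almost_decr_on {0<..} \<beta> (\<lambda>t. f t * g t / t powr (pp + q))"
  unfolding almost_decr_on_def
proof (intro ballI impI)
  fix s t :: real assume s: "s \<in> {0<..}" and t: "t \<in> {0<..}" and st: "s \<le> t"
  have A: "f t / t powr q \<le> f s / s powr q" using monotone_onD[OF anti s t st] by simp
  have B: "g t / t powr pp \<le> \<beta> * (g s / s powr pp)"
    using dec s t st unfolding almost_decr_on_def by auto
  have "(f t / t powr q) * (g t / t powr pp) \<le> (f s / s powr q) * (\<beta> * (g s / s powr pp))"
    using A B fnn[of s] fnn[of t] gnn[of s] gnn[of t] s t b by (intro mult_mono) auto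
  moreover have "\<And>x. x > 0 \<Longrightarrow> f x * g x / x powr (pp + q) = (f x / x powr q) * (g x / x powr pp)"
    by (simp add: powr_add)
  ultimately show "\<beta> * (f s * g s / s powr (pp + q)) \<ge> f t * g t / t powr (pp + q)"
    using s t by (simp add: algebra_simps powr_add)
qed

theorem theorem2p11:
  fixes \<Omega> :: "'a::euclidean_space set"
    and \<phi> \<psi> :: "real \<Rightarrow> 'a \<Rightarrow> 'a \<Rightarrow> real"
    and c7 c9 c10 :: real
  assumes dom: "is_domain \<Omega>"
    and phi_nn: "nonneg_fun \<Omega> \<phi>"
    and phi_C: "cond_C1 \<Omega> \<phi>" "cond_C2 \<Omega> \<phi>" "cond_C3 \<Omega> \<phi>" "cond_C4 \<Omega> \<phi>" "cond_C5 \<Omega> \<phi>"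
    and phi_C2: "\<forall>x\<in>\<Omega>. \<forall>y\<in>\<Omega>. C2_on {0<..} (\<lambda>z. \<phi> z x y)"
    and phi_dd: "AE2 \<Omega> (\<lambda>x y. \<forall>z>0.
        deriv (deriv (\<lambda>z. \<phi> z x y)) z \<ge> c7 * z powr (-2) * \<phi> z x y)"
    and psi_nn: "nonneg_fun \<Omega> \<psi>"
    and psi_mono: "AE2 \<Omega> (\<lambda>x y. mono_on {0..} (\<lambda>z. \<psi> z x y))"
    and psi_C2: "AE2 \<Omega> (\<lambda>x y. C2_on {0<..} (\<lambda>z. \<psi> z x y))"
    and psi_C: "cond_C1 \<Omega> \<psi>" "cond_C4 \<Omega> \<psi>" "cond_C5 \<Omega> \<psi>"
    and psi_dd: "AE2 \<Omega> (\<lambda>x y. \<forall>z>0.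
        deriv (deriv (\<lambda>z. \<psi> z x y)) z \<ge>
          - c9 * z powr (-1) * deriv (\<lambda>z. \<psi> z x y) z - c10 * z powr (-2) * \<psi> z x y)"
    and c9: "c9 < 2" and c10: "c10 < c7"
    and psi_q: "\<exists>q\<ge>0. AE2 \<Omega> (\<lambda>x y. antimono_on {0<..} (\<lambda>z. \<psi> z x y / z powr q))"
  shows "nonneg_fun \<Omega> (\<lambda>z x y. \<psi> z x y * \<phi> z x y)
    \<and> cond_C1 \<Omega> (\<lambda>z x y. \<psi> z x y * \<phi> z x y)
    \<and> cond_C2 \<Omega> (\<lambda>z x y. \<psi> z x y * \<phi> z x y)
    \<and> cond_C3 \<Omega> (\<lambda>z x y. \<psi> z x y * \<phi> z x y)
    \<and> cond_C4 \<Omega> (\<lambda>z x y. \<psi> z x y * \<phi> z x y)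
    \<and> cond_C5 \<Omega> (\<lambda>z x y. \<psi> z x y * \<phi> z x y)"
proof -
  let ?M = "lebesgue_on (\<Omega> \<times> \<Omega>)"
  have inO: "AE2 \<Omega> (\<lambda>x y. x \<in> \<Omega> \<and> y \<in> \<Omega>)"
    using AE_space[of ?M] by (rule eventually_mono) (auto simp: mem_Times_iff)
  obtain pm pp \<beta> where pb: "1 < pm" "pm \<le> pp" "\<beta> \<ge> 1"
    and C3g: "AE2 \<Omega> (\<lambda>x y. almost_incr_on {0<..} \<beta> (\<lambda>t. \<phi> t x y / t powr pm) \<and>
                  almost_decr_on {0<..} \<beta> (\<lambda>t. \<phi> t x y / t powr pp))"
    using phi_C(3) unfolding cond_C3_def by blast
  obtain a1 where a1: "a1 > 0" and C4g: "AE2 \<Omega> (\<lambda>x y. 1 / a1 \<le> \<phi> 1 x y \<and> \<phi> 1 x y \<le> a1 \<and>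
     \<phi> 0 x y = 0 \<and> (\<forall>t>0. \<phi> t x y > 0))"
    using phi_C(4) unfolding cond_C4_def by blast
  obtain b1 where b1: "b1 > 0" and C4f: "AE2 \<Omega> (\<lambda>x y. 1 / b1 \<le> \<psi> 1 x y \<and> \<psi> 1 x y \<le> b1 \<and>
     \<psi> 0 x y = 0 \<and> (\<forall>t>0. \<psi> t x y > 0))"
    using psi_C(2) unfolding cond_C4_def by blast
  obtain a2 where a2: "a2 > 1" and C5g: "AE2 \<Omega> (\<lambda>x y. \<forall>t>0.
     (\<lambda>z. \<phi> z x y) differentiable (at t) \<and>
     0 < t * deriv (\<lambda>z. \<phi> z x y) t \<and> t * deriv (\<lambda>z. \<phi> z x y) t \<le> a2 * \<phi> t x y)"
    using phi_C(5) unfolding cond_C5_def by blast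
  obtain b2 where b2: "b2 > 1" and C5f: "AE2 \<Omega> (\<lambda>x y. \<forall>t>0.
     (\<lambda>z. \<psi> z x y) differentiable (at t) \<and>
     0 < t * deriv (\<lambda>z. \<psi> z x y) t \<and> t * deriv (\<lambda>z. \<psi> z x y) t \<le> b2 * \<psi> t x y)"
    using psi_C(3) unfolding cond_C5_def by blast
  obtain q where q: "q \<ge> 0" and Qf: "AE2 \<Omega> (\<lambda>x y. antimono_on {0<..} (\<lambda>z. \<psi> z x y / z powr q))"
    using psi_q by blast
  have midn: "AE2 \<Omega> (\<lambda>x y. \<forall>s>0. \<forall>t>0. \<bar>s - t\<bar> \<ge> (1 / real (Suc n)) * max s t \<longrightarrow>
      \<phi> ((s + t) / 2) x y \<le> (\<phi> s x y + \<phi> t x y) / 2)" for n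
  proof -
    obtain \<delta> where d: "0 < \<delta>" "\<delta> < 1" and A: "AE2 \<Omega> (\<lambda>x y. \<forall>s>0. \<forall>t>0.
        \<bar>s - t\<bar> \<ge> (1 / real (Suc n)) * max s t \<longrightarrow>
        \<phi> ((s + t) / 2) x y \<le> (1 - \<delta>) * ((\<phi> s x y + \<phi> t x y) / 2))"
      using phi_C(2) unfolding cond_C2_def by (meson of_nat_0_less_iff zero_less_Suc divide_pos_pos zero_less_one)
    show ?thesis using A inO
    proof eventually_elim
      case (elim p)
      show ?case
      proof (intro allI impI)
        fix s t :: real assume s: "s > 0" and t: "t > 0" and g: "\<bar>s - t\<bar> \<ge> (1 / real (Suc n)) * max s t"
        have X: "\<phi> s (fst p) (snd p) + \<phi> t (fst p) (snd p) \<ge> 0"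
          using phi_nn elim(2) s t unfolding nonneg_fun_def by (simp add: add_nonneg_nonneg)
        have "\<phi> ((s + t) / 2) (fst p) (snd p) \<le> (1 - \<delta>) * ((\<phi> s (fst p) (snd p) + \<phi> t (fst p) (snd p)) / 2)"
          using elim(1) s t g by blast
        also have "\<dots> \<le> (\<phi> s (fst p) (snd p) + \<phi> t (fst p) (snd p)) / 2"
          using X d by (simp add: mult_left_le_one_le)
        finally show "\<phi> ((s + t) / 2) (fst p) (snd p) \<le> (\<phi> s (fst p) (snd p) + \<phi> t (fst p) (snd p)) / 2" .
      qed
    qed
  qed
  have midall: "AE2 \<Omega> (\<lambda>x y. \<forall>n. \<forall>s>0. \<forall>t>0. \<bar>s - t\<bar> \<ge> (1 / real (Suc n)) * max s t \<longrightarrow>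
      \<phi> ((s + t) / 2) x y \<le> (\<phi> s x y + \<phi> t x y) / 2)"
    using midn by (subst AE_all_countable) blast
  have mid: "AE2 \<Omega> (\<lambda>x y. \<forall>s>0. \<forall>t>0. \<phi> ((s + t) / 2) x y \<le> (\<phi> s x y + \<phi> t x y) / 2)"
    using midall
  proof eventually_elim
    case (elim p)
    show ?case
    proof (intro allI impI)
      fix s t :: real assume s: "s > 0" and t: "t > 0"
      show "\<phi> ((s + t) / 2) (fst p) (snd p) \<le> (\<phi> s (fst p) (snd p) + \<phi> t (fst p) (snd p)) / 2"
      proof (cases "s = t")
        case True then show ?thesis by simp
      next
        case False
        have mx: "max s t > 0" using s t by (simp add: less_max_iff_disj)
        have "\<bar>s - t\<bar> / max s t > 0" using False mx by simp
        then obtain n where n: "inverse (real (Suc n)) < \<bar>s - t\<bar> / max s t"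
          using reals_Archimedean by blast
        then have "(1 / real (Suc n)) * max s t \<le> \<bar>s - t\<bar>"
          using mx by (simp add: less_divide_eq inverse_eq_divide)
        then show ?thesis using elim s t by blast
      qed
    qed
  qed
  have P1: "nonneg_fun \<Omega> (\<lambda>z x y. \<psi> z x y * \<phi> z x y)"
    using phi_nn psi_nn unfolding nonneg_fun_def by (simp add: mult_nonneg_nonneg)
  have P2: "cond_C1 \<Omega> (\<lambda>z x y. \<psi> z x y * \<phi> z x y)"
    unfolding cond_C1_def
  proof
    fix u assume u: "u \<in> L1_loc \<Omega>"
    show "(\<lambda>p. \<psi> (cmod (u (fst p) - u (snd p))) (fst p) (snd p) * \<phi> (cmod (u (fst p) - u (snd p))) (fst p) (snd p))
       \<in> borel_measurable (lebesgue_on (\<Omega> \<times> \<Omega>))"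
      by (rule borel_measurable_times) (use phi_C(1) psi_C(1) u in \<open>unfold cond_C1_def, blast+\<close>)
  qed
  have P4: "cond_C4 \<Omega> (\<lambda>z x y. \<psi> z x y * \<phi> z x y)"
    unfolding cond_C4_def
  proof (intro exI[of _ "b1 * a1"] conjI)
    show "b1 * a1 > 0" using a1 b1 by simp
    show "AE2 \<Omega> (\<lambda>x y. 1 / (b1 * a1) \<le> \<psi> 1 x y * \<phi> 1 x y \<and> \<psi> 1 x y * \<phi> 1 x y \<le> b1 * a1 \<and>
      \<psi> 0 x y * \<phi> 0 x y = 0 \<and> (\<forall>t>0. \<psi> t x y * \<phi> t x y > 0))"
      using C4g C4f
    proof eventually_elim
      case (elim p)
      define A where "A = \<psi> 1 (fst p) (snd p)"
      define B where "B = \<phi> 1 (fst p) (snd p)"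
      have e1: "1 / a1 \<le> B" "B \<le> a1" using elim(1) unfolding B_def by auto
      have e2: "1 / b1 \<le> A" "A \<le> b1" using elim(2) unfolding A_def by auto
      have ab0: "A \<ge> 0" "B \<ge> 0"
        using e1 e2 a1 b1 by (smt (verit) divide_pos_pos)+
      have l: "1 / (b1 * a1) \<le> A * B"
      proof -
        have "1 / (b1 * a1) = (1 / b1) * (1 / a1)" by simp
        also have "\<dots> \<le> A * B"
          using e1 e2 a1 b1 ab0 by (intro mult_mono) auto
        finally show ?thesis .
      qed
      have u: "A * B \<le> b1 * a1"
        using e1 e2 a1 b1 ab0 by (intro mult_mono) auto
      have z: "\<psi> 0 (fst p) (snd p) * \<phi> 0 (fst p) (snd p) = 0" using elim(1) by simp
      have pz: "\<forall>t>0. \<psi> t (fst p) (snd p) * \<phi> t (fst p) (snd p) > 0"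
        using elim(1) elim(2) by (simp add: mult_pos_pos)
      show ?case using l u z pz unfolding A_def B_def by blast
    qed
  qed
  have P5: "cond_C5 \<Omega> (\<lambda>z x y. \<psi> z x y * \<phi> z x y)"
    unfolding cond_C5_def
  proof (intro exI[of _ "b2 + a2"] conjI)
    show "b2 + a2 > 1" using a2 b2 by simp
    show "AE2 \<Omega> (\<lambda>x y. \<forall>t>0.
     (\<lambda>z. \<psi> z x y * \<phi> z x y) differentiable (at t) \<and>
     0 < t * deriv (\<lambda>z. \<psi> z x y * \<phi> z x y) t \<and>
     t * deriv (\<lambda>z. \<psi> z x y * \<phi> z x y) t \<le> (b2 + a2) * (\<psi> t x y * \<phi> t x y))"
      using C5g C5f C4g C4f
    proof eventually_elim
      case (elim p)
      show ?case
      proof (intro allI impI conjI)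
        fix t :: real assume t: "t > 0"
        define f where "f = (\<lambda>z. \<psi> z (fst p) (snd p))"
        define g where "g = (\<lambda>z. \<phi> z (fst p) (snd p))"
        have fd: "f differentiable (at t)" "0 < t * deriv f t" "t * deriv f t \<le> b2 * f t"
          using elim(2) t unfolding f_def by auto
        have gd: "g differentiable (at t)" "0 < t * deriv g t" "t * deriv g t \<le> a2 * g t"
          using elim(1) t unfolding g_def by auto
        have fp: "f t > 0" using elim(4) t unfolding f_def by auto
        have gp: "g t > 0" using elim(3) t unfolding g_def by auto
        have D: "((\<lambda>z. f z * g z) has_real_derivative deriv f t * g t + f t * deriv g t) (at t)"
          using DERIV_mult[OF fd(1)[unfolded DERIV_deriv_iff_real_differentiable[symmetric]]
              gd(1)[unfolded DERIV_deriv_iff_real_differentiable[symmetric]]]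
          by (simp add: mult.commute)
        have dv: "deriv (\<lambda>z. f z * g z) t = deriv f t * g t + f t * deriv g t"
          using DERIV_imp_deriv[OF D] .
        have eq: "t * deriv (\<lambda>z. f z * g z) t = (t * deriv f t) * g t + f t * (t * deriv g t)"
          unfolding dv by (simp add: algebra_simps)
        show "(\<lambda>z. \<psi> z (fst p) (snd p) * \<phi> z (fst p) (snd p)) differentiable (at t)"
          using D unfolding f_def g_def real_differentiable_def by blast
        show "0 < t * deriv (\<lambda>z. \<psi> z (fst p) (snd p) * \<phi> z (fst p) (snd p)) t"
          using eq fd gd fp gp unfolding f_def g_def by (simp add: add_pos_pos)
        have "(t * deriv f t) * g t + f t * (t * deriv g t) \<le> (b2 * f t) * g t + f t * (a2 * g t)"
          using fd gd fp gp by (intro add_mono mult_right_mono mult_left_mono) auto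
        then show "t * deriv (\<lambda>z. \<psi> z (fst p) (snd p) * \<phi> z (fst p) (snd p)) t
            \<le> (b2 + a2) * (\<psi> t (fst p) (snd p) * \<phi> t (fst p) (snd p))"
          using eq unfolding f_def g_def by (simp add: algebra_simps)
      qed
    qed
  qed
  have P3: "cond_C3 \<Omega> (\<lambda>z x y. \<psi> z x y * \<phi> z x y)"
    unfolding cond_C3_def
  proof (rule exI[of _ pm], rule exI[of _ "pp + q"], rule exI[of _ \<beta>], intro conjI)
    show "1 < pm" "pm \<le> pp + q" "\<beta> \<ge> 1" using pb q by auto
    show "AE2 \<Omega> (\<lambda>x y. almost_incr_on {0<..} \<beta> (\<lambda>t. \<psi> t x y * \<phi> t x y / t powr pm) \<and>
                  almost_decr_on {0<..} \<beta> (\<lambda>t. \<psi> t x y * \<phi> t x y / t powr (pp + q)))"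
      using C3g Qf psi_mono inO
    proof eventually_elim
      case (elim p)
      have fnn: "\<psi> t (fst p) (snd p) \<ge> 0" if "t > 0" for t
        using psi_nn elim(4) that unfolding nonneg_fun_def by auto
      have gnn: "\<phi> t (fst p) (snd p) \<ge> 0" if "t > 0" for t
        using phi_nn elim(4) that unfolding nonneg_fun_def by auto
      show ?case
      proof
        show "almost_incr_on {0<..} \<beta> (\<lambda>t. \<psi> t (fst p) (snd p) * \<phi> t (fst p) (snd p) / t powr pm)"
          by (rule C3pt_incr[where f="\<lambda>z. \<psi> z (fst p) (snd p)" and g="\<lambda>z. \<phi> z (fst p) (snd p)"])
            (use elim fnn gnn in auto)
        show "almost_decr_on {0<..} \<beta> (\<lambda>t. \<psi> t (fst p) (snd p) * \<phi> t (fst p) (snd p) / t powr (pp + q))"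
          by (rule C3pt_decr[where f="\<lambda>z. \<psi> z (fst p) (snd p)" and g="\<lambda>z. \<phi> z (fst p) (snd p)"])
            (use elim fnn gnn pb in auto)
      qed
    qed
  qed
  have P6: "cond_C2 \<Omega> (\<lambda>z x y. \<psi> z x y * \<phi> z x y)"
    unfolding cond_C2_def
  proof (intro allI impI)
    fix \<epsilon> :: real assume e: "\<epsilon> > 0"
    define a where "a = (c7 - c10) * \<epsilon>^2 / 16"
    have a: "a > 0" using e c10 by (simp add: a_def)
    define \<delta> where "\<delta> = 1 - 1 / (1 + a)"
    have d: "0 < \<delta>" "\<delta> < 1" using a by (auto simp: \<delta>_def field_simps)
    have d1: "1 - \<delta> = 1 / (1 + (c7 - c10) * \<epsilon>^2 / 16)" by (simp add: \<delta>_def a_def)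
    have "AE2 \<Omega> (\<lambda>x y. \<forall>s>0. \<forall>t>0. \<bar>s - t\<bar> \<ge> \<epsilon> * max s t \<longrightarrow>
        \<psi> ((s + t) / 2) x y * \<phi> ((s + t) / 2) x y \<le> (1 - \<delta>) * ((\<psi> s x y * \<phi> s x y + \<psi> t x y * \<phi> t x y) / 2))"
      using inO psi_C2 psi_dd phi_dd C4g C4f C5g C5f C3g mid
    proof eventually_elim
      case (elim p)
      define f where "f = (\<lambda>z. \<psi> z (fst p) (snd p))"
      define g where "g = (\<lambda>z. \<phi> z (fst p) (snd p))"
      have gC2: "C2_on {0<..} g" using phi_C2 elim(1) unfolding g_def by auto
      have fC2: "C2_on {0<..} f" using elim(2) unfolding f_def by auto
      have gpos: "\<And>t. t > 0 \<Longrightarrow> g t > 0" using elim(5) unfolding g_def by auto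
      have fpos: "\<And>t. t > 0 \<Longrightarrow> f t > 0" using elim(6) unfolding f_def by auto
      have small: "\<And>w. 0 < w \<Longrightarrow> w \<le> 1 \<Longrightarrow> g w \<le> (\<beta> * g 1) * w"
        by (rule small_from_incr[where pm=pm]) (use elim(9) pb gpos in \<open>auto simp: g_def less_imp_le\<close>)
      have midg: "\<And>s t. s > 0 \<Longrightarrow> t > 0 \<Longrightarrow> g ((s + t) / 2) \<le> (g s + g t) / 2"
        using elim(10) unfolding g_def by auto
      show ?case
      proof (intro allI impI)
        fix s t :: real assume st: "s > 0" "t > 0" and gap: "\<bar>s - t\<bar> \<ge> \<epsilon> * max s t"
        have "f ((s + t) / 2) * g ((s + t) / 2) \<le>
           (1 / (1 + (c7 - c10) * \<epsilon>^2 / 16)) * ((f s * g s + f t * g t) / 2)"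
          by (rule C2pt[where C="\<beta> * g 1"])
            (use fC2 gC2 elim(7,8,3,4) fpos gpos small midg c9 c10 e st gap in \<open>auto simp: f_def g_def\<close>)
        then show "\<psi> ((s + t) / 2) (fst p) (snd p) * \<phi> ((s + t) / 2) (fst p) (snd p)
            \<le> (1 - \<delta>) * ((\<psi> s (fst p) (snd p) * \<phi> s (fst p) (snd p) + \<psi> t (fst p) (snd p) * \<phi> t (fst p) (snd p)) / 2)"
          unfolding d1 f_def g_def .
      qed
    qed
    then show "\<exists>\<delta>>0. \<delta> < 1 \<and> AE2 \<Omega> (\<lambda>x y. \<forall>s>0. \<forall>t>0. \<bar>s - t\<bar> \<ge> \<epsilon> * max s t \<longrightarrow>
        \<psi> ((s + t) / 2) x y * \<phi> ((s + t) / 2) x y \<le> (1 - \<delta>) * ((\<psi> s x y * \<phi> s x y + \<psi> t x y * \<phi> t x y) / 2))"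
      using d by blast
  qed
  show ?thesis using P1 P2 P3 P4 P5 P6 by blast
qed

end
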